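(* Let $n\geq 4$ and $G\in\mathcal{GAQ}_n$. (i) If $(a,b)$ is an edge of $G$, $A$ is the set of neighbors of $a$ and $B$ the set of neighbors of $b$, then $|(A\setminus\{b\})\setminus(B\setminus\{a\})|\geq 2$. (ii) If $a,b$ are distinct nonadjacent vertices of $G$ with neighbor sets $A$ and $B$ respectively, then $|A\setminus B|\geq 2$.
   Context: The $n$-dimensional augmented cube $AQ_n$ ($n\geq 1$) has vertex set all binary strings $u_1u_2\cdots u_n$. $AQ_1\cong K_2$ on vertices $0,1$. For $n\geq 2$, $AQ_n$ consists of a copy $AQ^0_{n-1}$ of $AQ_{n-1}$ with $0$ prefixed to every label and a copy $AQ^1_{n-1}$ with $1$ prefixed, plus the following edges: $0u_1\cdots u_{n-1}$ is adjacent to $1v_1\cdots v_{n-1}$ iff either $u_i=v_i$ for all $i$ (cross edge) or $u_i\neq v_i$ for all $i$ (complement edge). $AQ_n$ is $(2n-1)$-regular. Generalized augmented cubes: $\mathcal{GAQ}_4=\{AQ_4\}$; for $n\geq 5$, $\mathcal{GAQ}_n$ consists of all graphs $(V_1\cup V_2, E_1\cup E_2\cup M_1\cup M_2)$ where $(V_1,E_1),(V_2,E_2)$ are (vertex-disjoint copies of, possibly identical) graphs in $\mathcal{GAQ}_{n-1}$ and $M_1,M_2$ are edge-disjoint perfect matchings between $V_1$ and $V_2$. *)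

theory Defs
  imports Main
begin

text \<open>A graph is a pair (V, E) of a vertex set and a set of edges, each edge being
  a two-element set of vertices.\<close>
type_synonym 'a graph = "'a set \<times> 'a set set"

definition nbrs :: "'a graph \<Rightarrow> 'a \<Rightarrow> 'a set" where
  "nbrs G x = {y. {x, y} \<in> snd G}"

text \<open>Adjacency in the augmented cube on binary strings (bool lists), following the
  recursive definition: for the first letters equal, recurse into the copy; otherwise
  adjacent iff the tails are equal (cross edge) or complementary (complement edge).\<close>
fun aq_adj :: "bool list \<Rightarrow> bool list \<Rightarrow> bool" where
  "aq_adj (a # u) (b # v) = (if a = b then aq_adj u v else (v = u \<or> v = map Not u))"
| "aq_adj _ _ = False"

definition AQ :: "nat \<Rightarrow> bool list graph" where
  "AQ n = ({xs. length xs = n},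
           {{u, v} | u v. length u = n \<and> length v = n \<and> aq_adj u v})"

definition perfect_matching_between :: "'a set \<Rightarrow> 'a set \<Rightarrow> 'a set set \<Rightarrow> bool" where
  "perfect_matching_between V1 V2 M \<longleftrightarrow>
     M \<subseteq> {{x, y} | x y. x \<in> V1 \<and> y \<in> V2} \<and>
     (\<forall>v \<in> V1 \<union> V2. \<exists>!e. e \<in> M \<and> v \<in> e)"

text \<open>Generalized augmented cubes (as graphs on an arbitrary vertex type, up to isomorphism).\<close>
inductive gaq :: "nat \<Rightarrow> 'a graph \<Rightarrow> bool" where
  base: "bij_betw f (fst (AQ 4)) V \<Longrightarrow> E = (\<lambda>e. f ` e) ` snd (AQ 4) \<Longrightarrow> gaq 4 (V, E)"
| step: "gaq n (V1, E1) \<Longrightarrow> gaq n (V2, E2) \<Longrightarrow> V1 \<inter> V2 = {} \<Longrightarrow>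
         perfect_matching_between V1 V2 M1 \<Longrightarrow> perfect_matching_between V1 V2 M2 \<Longrightarrow>
         M1 \<inter> M2 = {} \<Longrightarrow> gaq (Suc n) (V1 \<union> V2, E1 \<union> E2 \<union> M1 \<union> M2)"

end

theory Submission
  imports Defs
begin

definition all4 :: "bool list list" where "all4 = List.n_lists 4 [False,True]"
definition NB :: "bool list \<Rightarrow> bool list list" where "NB u = filter (aq_adj u) all4"

lemma c1: "\<forall>u\<in>set all4. 4 \<le> card (set (NB u))" by code_simp
lemma c2: "\<forall>a\<in>set all4. \<forall>b\<in>set all4. aq_adj a b \<longrightarrow> 2 \<le> card ((set (NB a) - {b}) - (set (NB b) - {a}))" by code_simp
lemma c3: "\<forall>a\<in>set all4. \<forall>b\<in>set all4. a\<noteq>b \<and> \<not> aq_adj a b \<longrightarrow> 2 \<le> card (set (NB a) - set (NB b))" by code_simp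
lemma all4: "set all4 = {xs. length xs = 4}" unfolding all4_def by (auto simp: set_n_lists)
lemma aq_sym: "aq_adj u v \<Longrightarrow> aq_adj v u"
  by (induction u v rule: aq_adj.induct) (auto simp: comp_def)
lemma aq_len: "aq_adj u v \<Longrightarrow> length u = length v"
  by (induction u v rule: aq_adj.induct) (auto split: if_splits)
lemma aq_irr: "\<not> aq_adj u u"
  by (induction u) auto

definition wfg :: "'a graph \<Rightarrow> bool" where
  "wfg G \<longleftrightarrow> finite (fst G) \<and> (\<forall>e\<in>snd G. \<exists>x y. e = {x,y} \<and> x \<noteq> y \<and> x \<in> fst G \<and> y \<in> fst G)"
definition Deg :: "'a graph \<Rightarrow> bool" where
  "Deg G \<longleftrightarrow> (\<forall>v\<in>fst G. 4 \<le> card (nbrs G v))"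
definition P1 :: "'a graph \<Rightarrow> bool" where
  "P1 G \<longleftrightarrow> (\<forall>a b. {a,b}\<in>snd G \<longrightarrow> 2 \<le> card ((nbrs G a - {b}) - (nbrs G b - {a})))"
definition P2 :: "'a graph \<Rightarrow> bool" where
  "P2 G \<longleftrightarrow> (\<forall>a b. a\<in>fst G \<and> b\<in>fst G \<and> a\<noteq>b \<and> {a,b}\<notin>snd G \<longrightarrow> 2 \<le> card (nbrs G a - nbrs G b))"

lemma nbrs_AQ4: "length u = 4 \<Longrightarrow> nbrs (AQ 4) u = set (NB u)"
  unfolding nbrs_def AQ_def NB_def using all4
  by (auto simp: doubleton_eq_iff dest: aq_sym aq_len)

lemma edge_AQ4: "{a,b} \<in> snd (AQ 4) \<Longrightarrow> length a = 4 \<and> length b = 4 \<and> aq_adj a b"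
  unfolding AQ_def by (auto simp: doubleton_eq_iff dest: aq_sym)

lemma base_props: "wfg (AQ 4) \<and> Deg (AQ 4) \<and> P1 (AQ 4) \<and> P2 (AQ 4)"
proof (intro conjI)
  have f: "finite {xs::bool list. length xs = 4}" using all4 by (metis List.finite_set)
  show "wfg (AQ 4)" unfolding wfg_def using f
    by (auto simp: AQ_def dest: aq_len) (metis aq_irr)
  show "Deg (AQ 4)" unfolding Deg_def using c1 all4 nbrs_AQ4 by (auto simp: AQ_def)
  show "P1 (AQ 4)" unfolding P1_def
  proof (intro allI impI)
    fix a b assume "{a,b} \<in> snd (AQ 4)"
    then have "length a = 4 \<and> length b = 4 \<and> aq_adj a b" by (rule edge_AQ4)
    then show "2 \<le> card ((nbrs (AQ 4) a - {b}) - (nbrs (AQ 4) b - {a}))"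
      using c2 all4 nbrs_AQ4 by auto
  qed
  show "P2 (AQ 4)" unfolding P2_def
  proof (intro allI impI)
    fix a b assume h: "a \<in> fst (AQ 4) \<and> b \<in> fst (AQ 4) \<and> a \<noteq> b \<and> {a, b} \<notin> snd (AQ 4)"
    then have "length a = 4 \<and> length b = 4 \<and> \<not> aq_adj a b" by (auto simp: AQ_def)
    then show "2 \<le> card (nbrs (AQ 4) a - nbrs (AQ 4) b)"
      using h c3 all4 nbrs_AQ4 by auto
  qed
qed

lemma wf_edge: "wfg G \<Longrightarrow> {x,y} \<in> snd G \<Longrightarrow> x \<in> fst G \<and> y \<in> fst G \<and> x \<noteq> y"
  unfolding wfg_def by (metis doubleton_eq_iff insert_absorb2)

lemma nbrs_sub: "wfg G \<Longrightarrow> nbrs G x \<subseteq> fst G"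
  unfolding nbrs_def using wf_edge by fastforce

lemma nbrs_fin: "wfg G \<Longrightarrow> finite (nbrs G x)"
  using nbrs_sub wfg_def finite_subset by metis

lemma iso_nbrs:
  assumes wf: "wfg (V,E)" and inj: "inj_on f V" and x: "x \<in> V"
  shows "nbrs (f ` V, (\<lambda>e. f ` e) ` E) (f x) = f ` nbrs (V,E) x"
proof
  show "nbrs (f ` V, (\<lambda>e. f ` e) ` E) (f x) \<subseteq> f ` nbrs (V, E) x"
  proof
    fix y' assume "y' \<in> nbrs (f ` V, (\<lambda>e. f ` e) ` E) (f x)"
    then obtain e where e: "e \<in> E" "{f x, y'} = f ` e" by (auto simp: nbrs_def)
    then obtain p q where pq: "e = {p,q}" "p \<in> V" "q \<in> V" using wf unfolding wfg_def by force
    have "{f x, y'} = {f p, f q}" using e pq by auto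
    then have "(f x = f p \<and> y' = f q) \<or> (f x = f q \<and> y' = f p)" by (auto simp: doubleton_eq_iff)
    then show "y' \<in> f ` nbrs (V, E) x"
    proof
      assume h: "f x = f p \<and> y' = f q"
      then have "x = p" using inj x pq by (meson inj_on_def)
      then show ?thesis using h e pq by (auto simp: nbrs_def)
    next
      assume h: "f x = f q \<and> y' = f p"
      then have "x = q" using inj x pq by (meson inj_on_def)
      then show ?thesis using h e pq by (auto simp: nbrs_def insert_commute)
    qed
  qed
  show "f ` nbrs (V, E) x \<subseteq> nbrs (f ` V, (\<lambda>e. f ` e) ` E) (f x)"
  proof
    fix y' assume "y' \<in> f ` nbrs (V, E) x"
    then obtain y where "y' = f y" "{x,y} \<in> E" by (auto simp: nbrs_def)
    then show "y' \<in> nbrs (f ` V, (\<lambda>e. f ` e) ` E) (f x)"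
      unfolding nbrs_def by (auto intro!: image_eqI[where x="{x,y}"])
  qed
qed

lemma iso_props:
  assumes wf: "wfg (V,E)" and d: "Deg (V,E)" and p1: "P1 (V,E)" and p2: "P2 (V,E)"
    and bij: "bij_betw f V W" and E': "E' = (\<lambda>e. f ` e) ` E"
  shows "wfg (W,E') \<and> Deg (W,E') \<and> P1 (W,E') \<and> P2 (W,E')"
proof -
  have inj: "inj_on f V" and W: "W = f ` V" using bij by (auto simp: bij_betw_def)
  have nb: "\<And>x. x \<in> V \<Longrightarrow> nbrs (W,E') (f x) = f ` nbrs (V,E) x"
    using iso_nbrs[OF wf inj] W E' by simp
  have sub: "\<And>x. nbrs (V,E) x \<subseteq> V" using nbrs_sub[OF wf] by simp
  have cd: "\<And>A B. A \<subseteq> V \<Longrightarrow> B \<subseteq> V \<Longrightarrow> card (f ` A - f ` B) = card (A - B)"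
  proof -
    fix A B assume "A \<subseteq> V" "B \<subseteq> V"
    then have "A - B \<subseteq> V" by blast
    then have 1: "f ` (A - B) = f ` A - f ` B" using inj inj_on_image_set_diff[of f V A B] \<open>B \<subseteq> V\<close> by simp
    have "inj_on f (A - B)" using inj_on_subset[OF inj \<open>A - B \<subseteq> V\<close>] .
    then have "card (f ` (A - B)) = card (A - B)" by (rule card_image)
    then show "card (f ` A - f ` B) = card (A - B)" using 1 by simp
  qed
  have img1: "\<And>x y. x \<in> V \<Longrightarrow> y \<in> V \<Longrightarrow> f ` nbrs (V,E) x - {f y} = f ` (nbrs (V,E) x - {y})"
  proof -
    fix x y assume "x \<in> V" "y \<in> V"
    then show "f ` nbrs (V,E) x - {f y} = f ` (nbrs (V,E) x - {y})"
      using inj sub[of x] inj_on_image_set_diff[of f V "nbrs (V,E) x" "{y}"] by auto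
  qed
  show ?thesis
  proof (intro conjI)
    show "wfg (W,E')" unfolding wfg_def
    proof (intro conjI ballI)
      show "finite (fst (W,E'))" using wf W unfolding wfg_def by simp
    next
      fix e' assume "e' \<in> snd (W,E')"
      then obtain e where e: "e \<in> E" "e' = f ` e" using E' by auto
      then obtain x y where xy: "e = {x,y}" "x \<noteq> y" "x \<in> V" "y \<in> V" using wf unfolding wfg_def by force
      have "f x \<noteq> f y" using xy inj by (meson inj_on_def)
      then show "\<exists>x y. e' = {x,y} \<and> x \<noteq> y \<and> x \<in> fst (W,E') \<and> y \<in> fst (W,E')"
        using e xy W by auto
    qed
    show "Deg (W,E')" unfolding Deg_def
    proof
      fix v assume "v \<in> fst (W,E')"
      then obtain x where x: "x \<in> V" "v = f x" using W by auto
      have "card (nbrs (W,E') v) = card (nbrs (V,E) x)"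
        using nb[OF x(1)] x inj sub by (simp add: card_image inj_on_subset)
      then show "4 \<le> card (nbrs (W,E') v)" using d x unfolding Deg_def by auto
    qed
    show "P1 (W,E')" unfolding P1_def
    proof (intro allI impI)
      fix a b assume "{a,b} \<in> snd (W,E')"
      then obtain e where e: "e \<in> E" "{a,b} = f ` e" using E' by auto
      then obtain p q where pq: "e = {p,q}" "p \<in> V" "q \<in> V" using wf unfolding wfg_def by force
      have "{a,b} = {f p, f q}" using e pq by auto
      then have "(a = f p \<and> b = f q) \<or> (a = f q \<and> b = f p)" by (auto simp: doubleton_eq_iff)
      moreover have "\<And>x y. x \<in> V \<Longrightarrow> y \<in> V \<Longrightarrow> {x,y} \<in> E \<Longrightarrow>
          2 \<le> card ((nbrs (W,E') (f x) - {f y}) - (nbrs (W,E') (f y) - {f x}))"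
      proof -
        fix x y assume xy: "x \<in> V" "y \<in> V" "{x,y} \<in> E"
        have "(nbrs (W,E') (f x) - {f y}) - (nbrs (W,E') (f y) - {f x})
            = f ` (nbrs (V,E) x - {y}) - f ` (nbrs (V,E) y - {x})"
          using nb xy img1 by simp
        also have "card \<dots> = card ((nbrs (V,E) x - {y}) - (nbrs (V,E) y - {x}))"
          using cd sub by (meson Diff_subset subset_trans)
        finally show "2 \<le> card ((nbrs (W,E') (f x) - {f y}) - (nbrs (W,E') (f y) - {f x}))"
          using p1 xy unfolding P1_def by auto
      qed
      moreover have "{p,q} \<in> E" "{q,p} \<in> E" using e pq by (auto simp: insert_commute)
      ultimately show "2 \<le> card ((nbrs (W,E') a - {b}) - (nbrs (W,E') b - {a}))"
        using pq by blast
    qed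
    show "P2 (W,E')" unfolding P2_def
    proof (intro allI impI)
      fix a b assume h: "a \<in> fst (W,E') \<and> b \<in> fst (W,E') \<and> a \<noteq> b \<and> {a,b} \<notin> snd (W,E')"
      then obtain x y where xy: "x \<in> V" "y \<in> V" "a = f x" "b = f y" using W by auto
      have "x \<noteq> y" using h xy by auto
      moreover have "{x,y} \<notin> E"
      proof
        assume "{x,y} \<in> E"
        then have "f ` {x,y} \<in> E'" using E' by blast
        then show False using h xy by simp
      qed
      ultimately have "2 \<le> card (nbrs (V,E) x - nbrs (V,E) y)" using p2 xy unfolding P2_def by auto
      then show "2 \<le> card (nbrs (W,E') a - nbrs (W,E') b)" using nb xy cd sub by simp
    qed
  qed
qed


lemma pm_sym: "perfect_matching_between V1 V2 M \<Longrightarrow> perfect_matching_between V2 V1 M"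
  unfolding perfect_matching_between_def by (auto simp: insert_commute) (blast+)

lemma pm_cross: "perfect_matching_between V1 V2 M \<Longrightarrow> {x,y} \<in> M \<Longrightarrow> (x \<in> V1 \<and> y \<in> V2) \<or> (x \<in> V2 \<and> y \<in> V1)"
proof -
  assume "perfect_matching_between V1 V2 M" "{x,y} \<in> M"
  then have "{x,y} \<in> {{x, y} | x y. x \<in> V1 \<and> y \<in> V2}"
    unfolding perfect_matching_between_def by (meson subsetD)
  then obtain p q where "{x,y} = {p,q}" "p \<in> V1" "q \<in> V2" by blast
  then show ?thesis by (simp add: doubleton_eq_iff) blast
qed

lemma pm_partner:
  assumes "perfect_matching_between V1 V2 M" and "x \<in> V1 \<union> V2"
  shows "\<exists>p. {y. {x,y} \<in> M} \<subseteq> {p}"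
proof (cases "{y. {x,y} \<in> M} = {}")
  case True then show ?thesis by simp
next
  case False
  then obtain y0 where y0: "{x,y0} \<in> M" by auto
  have "\<forall>v\<in>V1 \<union> V2. \<exists>!e. e \<in> M \<and> v \<in> e"
    using assms(1) unfolding perfect_matching_between_def by (rule conjunct2)
  then have "\<exists>!e. e \<in> M \<and> x \<in> e" using assms(2) by (rule bspec)
  then obtain e where e: "e \<in> M \<and> x \<in> e" "\<And>e'. e' \<in> M \<and> x \<in> e' \<Longrightarrow> e' = e"
    by (rule ex1E) blast
  have "{y. {x,y} \<in> M} \<subseteq> {y0}"
  proof
    fix y assume "y \<in> {y. {x,y} \<in> M}"
    then have "{x,y} \<in> M" by simp
    then have "{x,y} = e" using e(2)[of "{x,y}"] by simp
    moreover have "{x,y0} = e" using e(2)[of "{x,y0}"] y0 by simp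
    ultimately have "{x,y} = {x,y0}" by simp
    then have "y = y0" by (auto simp: doubleton_eq_iff)
    then show "y \<in> {y0}" by simp
  qed
  then show ?thesis by blast
qed

lemma card_minus2:
  assumes "finite A" "4 \<le> card A"
  shows "2 \<le> card (A - {p,q})"
proof -
  have "card {p,q} \<le> 2" by (cases "p = q") auto
  moreover have "card A - card {p,q} \<le> card (A - {p,q})" by (rule diff_card_le_card_Diff) simp
  ultimately show ?thesis using assms by linarith
qed

lemma step_side:
  assumes wf1: "wfg (V1,E1)" and d1: "Deg (V1,E1)" and p1: "P1 (V1,E1)" and p2: "P2 (V1,E1)"
    and wf2: "wfg (V2,E2)" and disj: "V1 \<inter> V2 = {}"
    and m1: "perfect_matching_between V1 V2 M1" and m2: "perfect_matching_between V1 V2 M2"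
    and G: "G = (V1 \<union> V2, E1 \<union> E2 \<union> M1 \<union> M2)" and a: "a \<in> V1"
  shows "(\<forall>b. {a,b} \<in> snd G \<longrightarrow> 2 \<le> card ((nbrs G a - {b}) - (nbrs G b - {a})))
       \<and> (\<forall>b\<in>V1 \<union> V2. b \<noteq> a \<and> {a,b} \<notin> snd G \<longrightarrow> 2 \<le> card (nbrs G a - nbrs G b))
       \<and> 4 \<le> card (nbrs G a)"
proof -
  have nbG: "\<And>x. nbrs G x = nbrs (V1,E1) x \<union> nbrs (V2,E2) x \<union> {y. {x,y} \<in> M1} \<union> {y. {x,y} \<in> M2}"
    using G by (auto simp: nbrs_def)
  have E1in: "\<And>x y. {x,y} \<in> E1 \<Longrightarrow> x \<in> V1 \<and> y \<in> V1" using wf_edge[OF wf1] by auto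
  have E2in: "\<And>x y. {x,y} \<in> E2 \<Longrightarrow> x \<in> V2 \<and> y \<in> V2" using wf_edge[OF wf2] by auto
  have Min: "\<And>x y. {x,y} \<in> M1 \<union> M2 \<Longrightarrow> (x \<in> V1 \<and> y \<in> V2) \<or> (x \<in> V2 \<and> y \<in> V1)"
    using pm_cross[OF m1] pm_cross[OF m2] by blast
  have sub1: "\<And>x. nbrs (V1,E1) x \<subseteq> V1" using nbrs_sub[OF wf1] by simp
  have sub2: "\<And>x. nbrs (V2,E2) x \<subseteq> V2" using nbrs_sub[OF wf2] by simp
  have fin1: "\<And>x. finite (nbrs (V1,E1) x)" using nbrs_fin[OF wf1] .
  have A1: "\<And>x. x \<in> V1 \<Longrightarrow> nbrs G x \<inter> V1 = nbrs (V1,E1) x"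
  proof -
    fix x assume x: "x \<in> V1"
    have "nbrs (V2,E2) x = {}"
    proof -
      have "\<And>y. {x,y} \<notin> E2" using E2in x disj by blast
      then show ?thesis by (simp add: nbrs_def)
    qed
    moreover have "{y. {x,y} \<in> M1} \<union> {y. {x,y} \<in> M2} \<subseteq> V2" using Min x disj by blast
    ultimately show "nbrs G x \<inter> V1 = nbrs (V1,E1) x" using nbG[of x] sub1[of x] disj by blast
  qed
  have B1: "\<And>x. x \<in> V2 \<Longrightarrow> \<exists>p q. nbrs G x \<inter> V1 \<subseteq> {p,q}"
  proof -
    fix x assume x: "x \<in> V2"
    have "nbrs (V1,E1) x = {}"
    proof -
      have "\<And>y. {x,y} \<notin> E1" using E1in x disj by blast
      then show ?thesis by (simp add: nbrs_def)
    qed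
    moreover obtain p where "{y. {x,y} \<in> M1} \<subseteq> {p}" using pm_partner[OF m1] x by blast
    moreover obtain q where "{y. {x,y} \<in> M2} \<subseteq> {q}" using pm_partner[OF m2] x by blast
    ultimately have "nbrs G x \<inter> V1 \<subseteq> {p,q}" using nbG[of x] sub2[of x] disj by blast
    then show "\<exists>p q. nbrs G x \<inter> V1 \<subseteq> {p,q}" by blast
  qed
  have Ga: "nbrs (V1,E1) a \<subseteq> nbrs G a" using nbG[of a] by (simp only: Un_assoc Un_upper1)
  have finG: "finite (nbrs G a)"
  proof -
    have "{y. {a,y} \<in> M1} \<union> {y. {a,y} \<in> M2} \<subseteq> V1 \<union> V2" using Min by blast
    then have "nbrs G a \<subseteq> V1 \<union> V2" using nbG[of a] sub1[of a] sub2[of a] by blast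
    moreover have "finite (V1 \<union> V2)" using wf1 wf2 unfolding wfg_def by simp
    ultimately show ?thesis by (rule finite_subset)
  qed
  have dega: "4 \<le> card (nbrs (V1,E1) a)" using d1 a unfolding Deg_def by simp
  have cross: "\<And>b. b \<in> V2 \<Longrightarrow> 2 \<le> card (nbrs (V1,E1) a - nbrs G b)"
  proof -
    fix b assume b: "b \<in> V2"
    obtain p q where pq: "nbrs G b \<inter> V1 \<subseteq> {p,q}" using B1[OF b] by blast
    have "nbrs (V1,E1) a - {p,q} \<subseteq> nbrs (V1,E1) a - nbrs G b" using pq sub1[of a] by blast
    moreover have "2 \<le> card (nbrs (V1,E1) a - {p,q})" by (rule card_minus2[OF fin1 dega])
    moreover have "finite (nbrs (V1,E1) a - nbrs G b)" using fin1[of a] by simp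
    ultimately show "2 \<le> card (nbrs (V1,E1) a - nbrs G b)"
      using card_mono[of "nbrs (V1,E1) a - nbrs G b" "nbrs (V1,E1) a - {p,q}"] by linarith
  qed
  have partI: "\<forall>b. {a,b} \<in> snd G \<longrightarrow> 2 \<le> card ((nbrs G a - {b}) - (nbrs G b - {a}))"
  proof (intro allI impI)
    fix b assume ab: "{a,b} \<in> snd G"
    let ?T = "(nbrs G a - {b}) - (nbrs G b - {a})"
    have fT: "finite ?T" using finG by simp
    have "{a,b} \<in> E1 \<or> {a,b} \<in> E2 \<or> {a,b} \<in> M1 \<union> M2" using ab G by auto
    then have "b \<in> V1 \<or> b \<in> V2"
      using E1in[of a b] E2in[of a b] Min[of a b] by blast
    then show "2 \<le> card ?T"
    proof
      assume b: "b \<in> V2"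
      have "nbrs (V1,E1) a - nbrs G b \<subseteq> ?T" using Ga sub1[of a] b disj by blast
      then have "card (nbrs (V1,E1) a - nbrs G b) \<le> card ?T" by (rule card_mono[OF fT])
      then show ?thesis using cross[OF b] by linarith
    next
      assume b: "b \<in> V1"
      have "{a,b} \<notin> E2" using E2in[of a b] a disj by blast
      moreover have "{a,b} \<notin> M1 \<union> M2" using Min[of a b] a b disj by blast
      ultimately have "{a,b} \<in> E1" using ab G by auto
      then have c: "2 \<le> card ((nbrs (V1,E1) a - {b}) - (nbrs (V1,E1) b - {a}))"
        using p1 unfolding P1_def by simp
      have "(nbrs (V1,E1) a - {b}) - (nbrs (V1,E1) b - {a}) \<subseteq> ?T" (is "?S \<subseteq> _")
        using Ga A1[OF b] sub1[of a] by blast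
      then have "card ?S \<le> card ?T" by (rule card_mono[OF fT])
      then show ?thesis using c by linarith
    qed
  qed
  have partII: "\<forall>b\<in>V1 \<union> V2. b \<noteq> a \<and> {a,b} \<notin> snd G \<longrightarrow> 2 \<le> card (nbrs G a - nbrs G b)"
  proof (intro ballI impI)
    fix b assume b: "b \<in> V1 \<union> V2" and ab: "b \<noteq> a \<and> {a,b} \<notin> snd G"
    let ?T = "nbrs G a - nbrs G b"
    have fT: "finite ?T" using finG by simp
    from b show "2 \<le> card ?T"
    proof
      assume b: "b \<in> V2"
      have "nbrs (V1,E1) a - nbrs G b \<subseteq> ?T" using Ga by blast
      then have "card (nbrs (V1,E1) a - nbrs G b) \<le> card ?T" by (rule card_mono[OF fT])
      then show ?thesis using cross[OF b] by linarith
    next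
      assume b: "b \<in> V1"
      have "{a,b} \<notin> E1" using ab G by auto
      then have c: "2 \<le> card (nbrs (V1,E1) a - nbrs (V1,E1) b)"
        using p2[unfolded P2_def, rule_format, of a b] a b ab by auto
      have "nbrs (V1,E1) a - nbrs (V1,E1) b \<subseteq> ?T" (is "?S \<subseteq> _")
        using Ga A1[OF b] sub1[of a] by blast
      then have "card ?S \<le> card ?T" by (rule card_mono[OF fT])
      then show ?thesis using c by linarith
    qed
  qed
  have "4 \<le> card (nbrs G a)" using dega card_mono[OF finG Ga] by linarith
  then show ?thesis using partI partII by blast
qed

lemma gaq_props: "gaq n G \<Longrightarrow> wfg G \<and> Deg G \<and> P1 G \<and> P2 G"
proof (induction n G rule: gaq.induct)
  case (base f V E)
  have "wfg (fst (AQ 4), snd (AQ 4)) \<and> Deg (fst (AQ 4), snd (AQ 4)) \<and> P1 (fst (AQ 4), snd (AQ 4)) \<and> P2 (fst (AQ 4), snd (AQ 4))"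
    using base_props by simp
  then show ?case using iso_props base.hyps by blast
next
  case (step n V1 E1 V2 E2 M1 M2)
  define G where "G = (V1 \<union> V2, E1 \<union> E2 \<union> M1 \<union> M2)"
  have IH1: "wfg (V1,E1)" "Deg (V1,E1)" "P1 (V1,E1)" "P2 (V1,E1)" using step.IH(1) by auto
  have IH2: "wfg (V2,E2)" "Deg (V2,E2)" "P1 (V2,E2)" "P2 (V2,E2)" using step.IH(2) by auto
  have G2: "G = (V2 \<union> V1, E2 \<union> E1 \<union> M1 \<union> M2)" unfolding G_def by auto
  have side: "\<And>a. a \<in> V1 \<union> V2 \<Longrightarrow>
       (\<forall>b. {a,b} \<in> snd G \<longrightarrow> 2 \<le> card ((nbrs G a - {b}) - (nbrs G b - {a})))
       \<and> (\<forall>b\<in>V1 \<union> V2. b \<noteq> a \<and> {a,b} \<notin> snd G \<longrightarrow> 2 \<le> card (nbrs G a - nbrs G b))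
       \<and> 4 \<le> card (nbrs G a)"
  proof -
    fix a assume "a \<in> V1 \<union> V2"
    then show "?thesis a"
    proof
      assume a: "a \<in> V1"
      show ?thesis using step_side[OF IH1 IH2(1) step.hyps(3) step.hyps(4) step.hyps(5) G_def a] .
    next
      assume a: "a \<in> V2"
      have d: "V2 \<inter> V1 = {}" using step.hyps(3) by blast
      show ?thesis using step_side[OF IH2 IH1(1) d pm_sym[OF step.hyps(4)] pm_sym[OF step.hyps(5)] G2 a]
        by (simp add: Un_commute)
    qed
  qed
  have wfG: "wfg G" unfolding wfg_def
  proof (intro conjI ballI)
    show "finite (fst G)" using IH1(1) IH2(1) unfolding wfg_def G_def by simp
  next
    fix e assume e: "e \<in> snd G"
    show "\<exists>x y. e = {x,y} \<and> x \<noteq> y \<and> x \<in> fst G \<and> y \<in> fst G" (is ?Q)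
    proof -
      have "e \<in> E1 \<or> e \<in> E2 \<or> e \<in> M1 \<or> e \<in> M2" using e G_def by auto
      moreover have "e \<in> E1 \<Longrightarrow> ?Q" using IH1(1) unfolding wfg_def G_def fst_conv snd_conv by blast
      moreover have "e \<in> E2 \<Longrightarrow> ?Q" using IH2(1) unfolding wfg_def G_def fst_conv snd_conv by blast
      moreover have "\<And>M. perfect_matching_between V1 V2 M \<Longrightarrow> e \<in> M \<Longrightarrow> ?Q"
      proof -
        fix M assume "perfect_matching_between V1 V2 M" "e \<in> M"
        then have "e \<in> {{x, y} | x y. x \<in> V1 \<and> y \<in> V2}"
          unfolding perfect_matching_between_def by (meson subsetD)
        then obtain x y where "e = {x,y}" "x \<in> V1" "y \<in> V2" by blast
        moreover have "x \<noteq> y" using \<open>x \<in> V1\<close> \<open>y \<in> V2\<close> step.hyps(3) by blast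
        ultimately show ?Q unfolding G_def by auto
      qed
      ultimately show ?thesis using step.hyps(4,5) by blast
    qed
  qed
  have "Deg G" unfolding Deg_def
  proof
    fix v assume "v \<in> fst G"
    then have "v \<in> V1 \<union> V2" by (simp add: G_def)
    then show "4 \<le> card (nbrs G v)" by (rule side[THEN conjunct2, THEN conjunct2])
  qed
  moreover have "P1 G" unfolding P1_def
  proof (intro allI impI)
    fix a b assume ab: "{a,b} \<in> snd G"
    then have "a \<in> V1 \<union> V2" using wf_edge[OF wfG] G_def by auto
    then show "2 \<le> card ((nbrs G a - {b}) - (nbrs G b - {a}))"
      by (rule side[THEN conjunct1, rule_format, OF _ ab])
  qed
  moreover have "P2 G" unfolding P2_def
  proof (intro allI impI)
    fix a b assume ab: "a \<in> fst G \<and> b \<in> fst G \<and> a \<noteq> b \<and> {a,b} \<notin> snd G"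
    then have "a \<in> V1 \<union> V2" "b \<in> V1 \<union> V2" using G_def by auto
    moreover have "b \<noteq> a \<and> {a,b} \<notin> snd G" using ab by auto
    ultimately show "2 \<le> card (nbrs G a - nbrs G b)"
      by (rule side[THEN conjunct2, THEN conjunct1, rule_format])
  qed
  ultimately have "wfg G \<and> Deg G \<and> P1 G \<and> P2 G" using wfG by blast
  then show ?case by (simp only: G_def)
qed

theorem lemma3p3:
  fixes G :: "'a graph" and n :: nat
  assumes "n \<ge> 4" and "gaq n G"
  shows "(\<forall>a b. {a, b} \<in> snd G \<longrightarrow>
             card ((nbrs G a - {b}) - (nbrs G b - {a})) \<ge> 2)
       \<and> (\<forall>a b. a \<in> fst G \<and> b \<in> fst G \<and> a \<noteq> b \<and> {a, b} \<notin> snd G \<longrightarrow>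
             card (nbrs G a - nbrs G b) \<ge> 2)"
  using gaq_props[OF assms(2)] unfolding P1_def P2_def by blast

end
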